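(* Consider the stochastic platoon coordination setting described in the context, where the travel times and start times form a random element $\boldsymbol\tau$ taking values in a countable set of realizations $\tau$ with probabilities $\Pr(\boldsymbol\tau=\tau)$, and vehicle $i$'s utility is $U^i(\boldsymbol w^i,\boldsymbol w^{-i})=\sum_{\tau}\Pr(\boldsymbol\tau=\tau)\,U^i(\boldsymbol w^i,\boldsymbol w^{-i},\tau)$. Then the game $G^s=(\mathcal N,\mathcal W,\{U^i\}_{i\in\mathcal N})$, $\mathcal W=\mathcal W^1\times\dots\times\mathcal W^N$, is an exact potential game with potential function $$\Phi(\boldsymbol w)=\sum_{\tau}\Pr(\boldsymbol\tau=\tau)\,\Phi(\boldsymbol w,\tau),\qquad \Phi(\boldsymbol w,\tau)=\sum_{t\in\mathbb Z_+}\sum_{e\in\mathcal E} r\big(|C(e,t,\boldsymbol w,\tau)|,e\big)-\sum_{i\in\mathcal N}\Lambda_i(\boldsymbol w^i),$$ where $r(n,e)=\sum_{j=1}^nR(j,e)$; that is, $\Phi(\boldsymbol w^{i\prime},\boldsymbol w^{-i})-\Phi(\boldsymbol w^{i\prime\prime},\boldsymbol w^{-i})=U^i(\boldsymbol w^{i\prime},\boldsymbol w^{-i})-U^i(\boldsymbol w^{i\prime\prime},\boldsymbol w^{-i})$ for all $i$, all $\boldsymbol w^{i\prime},\boldsymbol w^{i\prime\prime}\in\mathcal W^i$ and all $\boldsymbol w^{-i}$. Hence $G^s$ admits at least one pure Nash equilibrium.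
   Context: Deterministic ingredients: a directed graph $\mathcal G=(\mathcal V,\mathcal E)$; vehicles $\mathcal N=\{1,\dots,N\}$; vehicle $i$ has a fixed path of edges $e^i_1,\dots,e^i_{|\mathcal P^i|}$ with $e^i_k$ from node $v^i_k$ to $v^i_{k+1}$; a finite action set $\mathcal W^i$ of waiting-time vectors $\boldsymbol w^i=(w^i_1,\dots,w^i_{|\mathcal P^i|})\in\mathbb Z_+^{|\mathcal P^i|}$ ($w^i_k$ = waiting time at $v^i_k$); a reward function $R:\mathbb Z_{\ge1}\times\mathcal E\to\mathbb R$; waiting costs $\Lambda_i:\mathcal W^i\to\mathbb R$. A realization $\tau$ consists of travel times $\tau(e,t)\in\mathbb Z_+$ for every $e\in\mathcal E$, $t\in\mathbb Z_+$ (travel time on $e$ when entered at time $t$) and start times $\tau_0^i\in\mathbb Z_+$ (arrival time at $v^i_1$). Given $\tau$ and $\boldsymbol w$, departure times are $t^i_1=\tau^i_0+w^i_1$, $t^i_{k+1}=w^i_{k+1}+t^i_k+\tau(e^i_k,t^i_k)$; $C(e,t,\boldsymbol w,\tau)=\{i:\exists k,\ e^i_k=e,\ t^i_k=t\}$; and $$U^i(\boldsymbol w^i,\boldsymbol w^{-i},\tau)=\sum_{k=1}^{|\mathcal P^i|}R\big(|C(e^i_k,t^i_k,\boldsymbol w,\tau)|,e^i_k\big)-\Lambda_i(\boldsymbol w^i).$$ A game is an exact potential game if a function $\Phi$ on action profiles exists such that any unilateral change of one player's action changes $\Phi$ by exactly the change in that player's utility. A pure Nash equilibrium is a profile from which no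 player can increase its own utility by a unilateral change of action. *)

theory Defs
  imports "HOL-Probability.Probability"
begin

text \<open>A realization
  consists of travel times tt e t (travel time on edge e when entered at time t)
  and start times s0 i (arrival time of vehicle i at its first node).
  Paths and waiting vectors are 0-indexed lists: position k here is k+1 in the paper.\<close>

type_synonym ('v) realization = "(('v \<times> 'v) \<Rightarrow> nat \<Rightarrow> nat) \<times> (nat \<Rightarrow> nat)"

fun dep :: "(('v \<times> 'v) \<Rightarrow> nat \<Rightarrow> nat) \<Rightarrow> nat \<Rightarrow> ('v \<times> 'v) list \<Rightarrow> nat list \<Rightarrow> nat \<Rightarrow> nat" where
  "dep tt s p wv 0 = s + wv ! 0"
| "dep tt s p wv (Suc k) = wv ! Suc k + dep tt s p wv k + tt (p ! k) (dep tt s p wv k)"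

definition coal :: "nat \<Rightarrow> (nat \<Rightarrow> ('v \<times> 'v) list) \<Rightarrow> ('v \<times> 'v) \<Rightarrow> nat \<Rightarrow> (nat \<Rightarrow> nat list) \<Rightarrow> 'v realization \<Rightarrow> nat set" where
  "coal N P e t w \<tau> = {i \<in> {1..N}. \<exists>k < length (P i). P i ! k = e \<and> dep (fst \<tau>) (snd \<tau> i) (P i) (w i) k = t}"

definition util :: "nat \<Rightarrow> (nat \<Rightarrow> ('v \<times> 'v) list) \<Rightarrow> (nat \<Rightarrow> ('v \<times> 'v) \<Rightarrow> real) \<Rightarrow> (nat \<Rightarrow> nat list \<Rightarrow> real)
     \<Rightarrow> nat \<Rightarrow> (nat \<Rightarrow> nat list) \<Rightarrow> 'v realization \<Rightarrow> real" where
  "util N P R \<Lambda> i w \<tau> =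
     (\<Sum>k<length (P i). R (card (coal N P (P i ! k) (dep (fst \<tau>) (snd \<tau> i) (P i) (w i) k) w \<tau>)) (P i ! k))
     - \<Lambda> i (w i)"

definition exp_util :: "'v realization pmf \<Rightarrow> nat \<Rightarrow> (nat \<Rightarrow> ('v \<times> 'v) list) \<Rightarrow> (nat \<Rightarrow> ('v \<times> 'v) \<Rightarrow> real)
     \<Rightarrow> (nat \<Rightarrow> nat list \<Rightarrow> real) \<Rightarrow> nat \<Rightarrow> (nat \<Rightarrow> nat list) \<Rightarrow> real" where
  "exp_util p N P R \<Lambda> i w = measure_pmf.expectation p (\<lambda>\<tau>. util N P R \<Lambda> i w \<tau>)"

definition rcum :: "(nat \<Rightarrow> ('v \<times> 'v) \<Rightarrow> real) \<Rightarrow> nat \<Rightarrow> ('v \<times> 'v) \<Rightarrow> real" where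
  "rcum R n e = (\<Sum>j=1..n. R j e)"

definition pot :: "('v \<times> 'v) set \<Rightarrow> nat \<Rightarrow> (nat \<Rightarrow> ('v \<times> 'v) list) \<Rightarrow> (nat \<Rightarrow> ('v \<times> 'v) \<Rightarrow> real)
     \<Rightarrow> (nat \<Rightarrow> nat list \<Rightarrow> real) \<Rightarrow> (nat \<Rightarrow> nat list) \<Rightarrow> 'v realization \<Rightarrow> real" where
  "pot E N P R \<Lambda> w \<tau> =
     (\<Sum>\<^sub>\<infinity>t::nat. \<Sum>e\<in>E. rcum R (card (coal N P e t w \<tau>)) e) - (\<Sum>i=1..N. \<Lambda> i (w i))"

definition exp_pot :: "'v realization pmf \<Rightarrow> ('v \<times> 'v) set \<Rightarrow> nat \<Rightarrow> (nat \<Rightarrow> ('v \<times> 'v) list)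
     \<Rightarrow> (nat \<Rightarrow> ('v \<times> 'v) \<Rightarrow> real) \<Rightarrow> (nat \<Rightarrow> nat list \<Rightarrow> real) \<Rightarrow> (nat \<Rightarrow> nat list) \<Rightarrow> real" where
  "exp_pot p E N P R \<Lambda> w = measure_pmf.expectation p (\<lambda>\<tau>. pot E N P R \<Lambda> w \<tau>)"

definition profile :: "'i set \<Rightarrow> ('i \<Rightarrow> 'a set) \<Rightarrow> ('i \<Rightarrow> 'a) \<Rightarrow> bool" where
  "profile I A w \<longleftrightarrow> (\<forall>j\<in>I. w j \<in> A j)"

definition exact_potential :: "'i set \<Rightarrow> ('i \<Rightarrow> 'a set) \<Rightarrow> ('i \<Rightarrow> ('i \<Rightarrow> 'a) \<Rightarrow> real) \<Rightarrow> (('i \<Rightarrow> 'a) \<Rightarrow> real) \<Rightarrow> bool" where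
  "exact_potential I A u \<Phi> \<longleftrightarrow>
     (\<forall>i\<in>I. \<forall>w. profile I A w \<longrightarrow> (\<forall>a\<in>A i. \<forall>b\<in>A i.
        \<Phi> (w(i := a)) - \<Phi> (w(i := b)) = u i (w(i := a)) - u i (w(i := b))))"

definition pure_nash :: "'i set \<Rightarrow> ('i \<Rightarrow> 'a set) \<Rightarrow> ('i \<Rightarrow> ('i \<Rightarrow> 'a) \<Rightarrow> real) \<Rightarrow> ('i \<Rightarrow> 'a) \<Rightarrow> bool" where
  "pure_nash I A u w \<longleftrightarrow> profile I A w \<and> (\<forall>i\<in>I. \<forall>a\<in>A i. u i (w(i := a)) \<le> u i w)"

end

theory Submission
  imports Defs
begin


definition segs :: "(nat \<Rightarrow> ('v \<times> 'v) list) \<Rightarrow> (nat \<Rightarrow> nat list) \<Rightarrow> 'v realization \<Rightarrow> nat \<Rightarrow> (('v \<times> 'v) \<times> nat) set" where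
  "segs P w \<tau> j = (\<lambda>k. (P j ! k, dep (fst \<tau>) (snd \<tau> j) (P j) (w j) k)) ` {..<length (P j)}"

lemma coal_eq: "coal N P e t w \<tau> = {j\<in>{1..N}. (e,t) \<in> segs P w \<tau> j}"
  unfolding coal_def segs_def by auto

lemma finite_segs[simp]: "finite (segs P w \<tau> j)"
  unfolding segs_def by simp

lemma card_segs: "card (segs P w \<tau> j) \<le> length (P j)"
  unfolding segs_def using card_image_le[of "{..<length (P j)}"] by simp

lemma rcum_0[simp]: "rcum R 0 e = 0" unfolding rcum_def by simp
lemma rcum_Suc: "rcum R (Suc n) e = rcum R n e + R (Suc n) e"
  unfolding rcum_def by simp

definition cnto where
  "cnto N P i w \<tau> r = card {j\<in>{1..N}-{i}. r \<in> segs P w \<tau> j}"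
definition Soth where
  "Soth N P i w \<tau> = (\<Union>j\<in>{1..N}-{i}. segs P w \<tau> j)"
definition Qf where
  "Qf N P R \<Lambda> i w \<tau> = (\<Sum>r\<in>Soth N P i w \<tau>. rcum R (cnto N P i w \<tau> r) (fst r)) - (\<Sum>j\<in>{1..N}-{i}. \<Lambda> j (w j))"

lemma Qf_upd: "Qf N P R \<Lambda> i (w(i:=a)) \<tau> = Qf N P R \<Lambda> i w \<tau>"
proof -
  have 1: "\<And>j. j \<noteq> i \<Longrightarrow> segs P (w(i:=a)) \<tau> j = segs P w \<tau> j" unfolding segs_def by simp
  have "Soth N P i (w(i:=a)) \<tau> = Soth N P i w \<tau>" unfolding Soth_def using 1 by auto
  moreover have "cnto N P i (w(i:=a)) \<tau> = cnto N P i w \<tau>"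
    unfolding cnto_def using 1 by (intro ext arg_cong[where f=card]) auto
  moreover have "(\<Sum>j\<in>{1..N}-{i}. \<Lambda> j ((w(i:=a)) j)) = (\<Sum>j\<in>{1..N}-{i}. \<Lambda> j (w j))"
    by (intro sum.cong) auto
  ultimately show ?thesis unfolding Qf_def by simp
qed

lemma infsum_part:
  assumes finE: "finite E" and pE: "\<And>j. j \<in> {1..N} \<Longrightarrow> set (P j) \<subseteq> E"
  shows "(\<Sum>\<^sub>\<infinity>t::nat. \<Sum>e\<in>E. rcum R (card (coal N P e t w \<tau>)) e)
       = (\<Sum>r\<in>(\<Union>j\<in>{1..N}. segs P w \<tau> j). rcum R (card (coal N P (fst r) (snd r) w \<tau>)) (fst r))"
proof -
  define X where "X = (\<Union>j\<in>{1..N}. segs P w \<tau> j)"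
  define T where "T = snd ` X"
  have finX: "finite X" unfolding X_def by simp
  have finT: "finite T" unfolding T_def using finX by simp
  have XET: "X \<subseteq> E \<times> T"
  proof
    fix r assume r: "r \<in> X"
    then obtain j k where j: "j \<in> {1..N}" and k: "k < length (P j)"
      and rr: "r = (P j ! k, dep (fst \<tau>) (snd \<tau> j) (P j) (w j) k)"
      unfolding X_def segs_def by auto
    have "P j ! k \<in> E" using pE[OF j] k by (meson nth_mem subsetD)
    moreover have "snd r \<in> T" using r unfolding T_def by simp
    ultimately show "r \<in> E \<times> T" using rr by auto
  qed
  have zero: "card (coal N P e t w \<tau>) = 0" if "(e,t) \<notin> X" for e t
  proof -
    have "coal N P e t w \<tau> = {}" using that unfolding coal_eq X_def by auto
    then show ?thesis by simp
  qed
  have "(\<Sum>\<^sub>\<infinity>t::nat. \<Sum>e\<in>E. rcum R (card (coal N P e t w \<tau>)) e)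
      = (\<Sum>\<^sub>\<infinity>t\<in>T. \<Sum>e\<in>E. rcum R (card (coal N P e t w \<tau>)) e)"
  proof (rule infsum_cong_neutral)
    fix t assume "t \<in> UNIV - T"
    then have "\<And>e. (e,t) \<notin> X" unfolding T_def by force
    then show "(\<Sum>e\<in>E. rcum R (card (coal N P e t w \<tau>)) e) = 0" using zero by simp
  qed auto
  also have "\<dots> = (\<Sum>t\<in>T. \<Sum>e\<in>E. rcum R (card (coal N P e t w \<tau>)) e)"
    using finT by simp
  also have "\<dots> = (\<Sum>e\<in>E. \<Sum>t\<in>T. rcum R (card (coal N P e t w \<tau>)) e)"
    by (rule sum.swap)
  also have "\<dots> = (\<Sum>(e,t)\<in>E \<times> T. rcum R (card (coal N P e t w \<tau>)) e)"
    by (rule sum.cartesian_product)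
  also have "\<dots> = (\<Sum>r\<in>E \<times> T. rcum R (card (coal N P (fst r) (snd r) w \<tau>)) (fst r))"
    by (simp add: case_prod_beta)
  also have "\<dots> = (\<Sum>r\<in>X. rcum R (card (coal N P (fst r) (snd r) w \<tau>)) (fst r))"
    by (rule sum.mono_neutral_right) (use finE finT XET zero in auto)
  finally show ?thesis unfolding X_def .
qed



lemma card_coal_split:
  assumes i: "i \<in> {1..N}"
  shows "card (coal N P (fst r) (snd r) w \<tau>) = cnto N P i w \<tau> r + (if r \<in> segs P w \<tau> i then 1 else 0)"
proof -
  let ?A = "{j\<in>{1..N}-{i}. r \<in> segs P w \<tau> j}"
  have fA: "finite ?A" by simp
  show ?thesis
  proof (cases "r \<in> segs P w \<tau> i")
    case True
    then have "coal N P (fst r) (snd r) w \<tau> = insert i ?A" unfolding coal_eq using i by auto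
    then show ?thesis using True fA unfolding cnto_def by simp
  next
    case False
    then have "coal N P (fst r) (snd r) w \<tau> = ?A" unfolding coal_eq using i by auto
    then show ?thesis using False unfolding cnto_def by simp
  qed
qed

lemma util_reindex:
  assumes d: "distinct (P i)"
  shows "(\<Sum>k<length (P i). R (card (coal N P (P i ! k) (dep (fst \<tau>) (snd \<tau> i) (P i) (w i) k) w \<tau>)) (P i ! k))
    = (\<Sum>r\<in>segs P w \<tau> i. R (card (coal N P (fst r) (snd r) w \<tau>)) (fst r))"
proof -
  have inj: "inj_on (\<lambda>k. (P i ! k, dep (fst \<tau>) (snd \<tau> i) (P i) (w i) k)) {..<length (P i)}"
    using d by (auto simp: inj_on_def nth_eq_iff_index_eq)
  show ?thesis unfolding segs_def by (subst sum.reindex[OF inj]) simp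
qed

lemma pot_decomp:
  assumes finE: "finite E" and pE: "\<And>j. j \<in> {1..N} \<Longrightarrow> set (P j) \<subseteq> E"
    and i: "i \<in> {1..N}" and d: "distinct (P i)"
  shows "pot E N P R \<Lambda> w \<tau> = Qf N P R \<Lambda> i w \<tau> + util N P R \<Lambda> i w \<tau>"
proof -
  define X where "X = (\<Union>j\<in>{1..N}. segs P w \<tau> j)"
  let ?S = "segs P w \<tau> i"
  let ?O = "Soth N P i w \<tau>"
  let ?c = "\<lambda>r. card (coal N P (fst r) (snd r) w \<tau>)"
  have XU: "X = ?O \<union> ?S" unfolding X_def Soth_def using i by auto
  have finX: "finite X" unfolding X_def by simp
  have "(\<Sum>r\<in>X. rcum R (?c r) (fst r))
      = (\<Sum>r\<in>X. rcum R (cnto N P i w \<tau> r) (fst r) + (if r \<in> ?S then R (?c r) (fst r) else 0))"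
  proof (rule sum.cong)
    fix r assume "r \<in> X"
    show "rcum R (?c r) (fst r) = rcum R (cnto N P i w \<tau> r) (fst r) + (if r \<in> ?S then R (?c r) (fst r) else 0)"
      using card_coal_split[OF i, of P r w \<tau>] by (auto simp: rcum_Suc)
  qed simp
  also have "\<dots> = (\<Sum>r\<in>X. rcum R (cnto N P i w \<tau> r) (fst r)) + (\<Sum>r\<in>X. if r \<in> ?S then R (?c r) (fst r) else 0)"
    by (rule sum.distrib)
  also have "(\<Sum>r\<in>X. rcum R (cnto N P i w \<tau> r) (fst r)) = (\<Sum>r\<in>?O. rcum R (cnto N P i w \<tau> r) (fst r))"
  proof (rule sum.mono_neutral_right)
    show "\<forall>r\<in>X - ?O. rcum R (cnto N P i w \<tau> r) (fst r) = 0"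
    proof
      fix r assume "r \<in> X - ?O"
      then have "{j\<in>{1..N}-{i}. r \<in> segs P w \<tau> j} = {}" unfolding Soth_def by auto
      then show "rcum R (cnto N P i w \<tau> r) (fst r) = 0" unfolding cnto_def by (metis card.empty rcum_0)
    qed
  qed (use finX XU in auto)
  also have "(\<Sum>r\<in>X. if r \<in> ?S then R (?c r) (fst r) else 0) = (\<Sum>r\<in>X \<inter> ?S. R (?c r) (fst r))"
    by (rule sum.inter_restrict[symmetric]) (rule finX)
  also have "X \<inter> ?S = ?S" using XU by auto
  finally have main: "(\<Sum>r\<in>X. rcum R (?c r) (fst r)) = (\<Sum>r\<in>?O. rcum R (cnto N P i w \<tau> r) (fst r)) + (\<Sum>r\<in>?S. R (?c r) (fst r))" .
  have L: "(\<Sum>j=1..N. \<Lambda> j (w j)) = \<Lambda> i (w i) + (\<Sum>j\<in>{1..N}-{i}. \<Lambda> j (w j))"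
    using i by (simp add: sum.remove)
  show ?thesis
    using infsum_part[where N=N and P=P and R=R and w=w and \<tau>=\<tau>, OF finE pE, folded X_def] main
    unfolding pot_def Qf_def util_def util_reindex[where P=P and i=i, OF d] L
    by simp
qed



lemma R_bound:
  fixes R :: "nat \<Rightarrow> ('v \<times> 'v) \<Rightarrow> real"
  assumes "finite E" "e \<in> E" "1 \<le> n" "n \<le> N"
  shows "\<bar>R n e\<bar> \<le> (\<Sum>e'\<in>E. \<Sum>j=1..N. \<bar>R j e'\<bar>)"
proof -
  have "\<bar>R n e\<bar> \<le> (\<Sum>j=1..N. \<bar>R j e\<bar>)"
    using assms by (intro member_le_sum[where f="\<lambda>j. \<bar>R j e\<bar>"]) auto
  also have "\<dots> \<le> (\<Sum>e'\<in>E. \<Sum>j=1..N. \<bar>R j e'\<bar>)"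
    using assms by (intro member_le_sum) (auto intro: sum_nonneg)
  finally show ?thesis .
qed

lemma rcum_bound:
  fixes R :: "nat \<Rightarrow> ('v \<times> 'v) \<Rightarrow> real"
  assumes "finite E" "e \<in> E" "n \<le> N"
  shows "\<bar>rcum R n e\<bar> \<le> (\<Sum>e'\<in>E. \<Sum>j=1..N. \<bar>R j e'\<bar>)"
proof -
  have "\<bar>rcum R n e\<bar> \<le> (\<Sum>j=1..n. \<bar>R j e\<bar>)" unfolding rcum_def by (rule sum_abs)
  also have "\<dots> \<le> (\<Sum>j=1..N. \<bar>R j e\<bar>)"
    using assms by (intro sum_mono2) auto
  also have "\<dots> \<le> (\<Sum>e'\<in>E. \<Sum>j=1..N. \<bar>R j e'\<bar>)"
    using assms by (intro member_le_sum) (auto intro: sum_nonneg)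
  finally show ?thesis .
qed

lemma card_coal_le: "card (coal N P e t w \<tau>) \<le> N"
proof -
  have "coal N P e t w \<tau> \<subseteq> {1..N}" unfolding coal_def by auto
  then have "card (coal N P e t w \<tau>) \<le> card {1..N}" by (intro card_mono) auto
  then show ?thesis by simp
qed

lemma sum_abs_bound:
  fixes f :: "'a \<Rightarrow> real"
  assumes "finite A" "\<And>x. x \<in> A \<Longrightarrow> \<bar>f x\<bar> \<le> B"
  shows "\<bar>sum f A\<bar> \<le> real (card A) * B"
proof -
  have "\<bar>sum f A\<bar> \<le> (\<Sum>x\<in>A. \<bar>f x\<bar>)" by (rule sum_abs)
  also have "\<dots> \<le> (\<Sum>x\<in>A. B)" using assms by (intro sum_mono) auto
  finally show ?thesis by simp
qed

lemma util_bound: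
  assumes finE: "finite E" and pE: "\<And>j. j \<in> {1..N} \<Longrightarrow> set (P j) \<subseteq> E" and i: "i \<in> {1..N}"
  shows "\<bar>util N P R \<Lambda> i w \<tau>\<bar> \<le> real (length (P i)) * (\<Sum>e'\<in>E. \<Sum>j=1..N. \<bar>R j e'\<bar>) + \<bar>\<Lambda> i (w i)\<bar>"
proof -
  let ?B = "(\<Sum>e'\<in>E. \<Sum>j=1..N. \<bar>R j e'\<bar>)"
  have "\<bar>(\<Sum>k<length (P i). R (card (coal N P (P i ! k) (dep (fst \<tau>) (snd \<tau> i) (P i) (w i) k) w \<tau>)) (P i ! k))\<bar>
     \<le> real (card {..<length (P i)}) * ?B"
  proof (rule sum_abs_bound)
    fix k assume k: "k \<in> {..<length (P i)}"
    have "i \<in> coal N P (P i ! k) (dep (fst \<tau>) (snd \<tau> i) (P i) (w i) k) w \<tau>"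
      unfolding coal_def using i k by auto
    moreover have "finite (coal N P (P i ! k) (dep (fst \<tau>) (snd \<tau> i) (P i) (w i) k) w \<tau>)"
      unfolding coal_def by simp
    ultimately have c1: "card (coal N P (P i ! k) (dep (fst \<tau>) (snd \<tau> i) (P i) (w i) k) w \<tau>) \<ge> 1"
      by (metis One_nat_def Suc_leI card_gt_0_iff empty_iff)
    have c2: "P i ! k \<in> E" using pE[OF i] k by (meson lessThan_iff nth_mem subsetD)
    show "\<bar>R (card (coal N P (P i ! k) (dep (fst \<tau>) (snd \<tau> i) (P i) (w i) k) w \<tau>)) (P i ! k)\<bar> \<le> ?B"
      by (rule R_bound[OF finE c2 c1 card_coal_le])
  qed simp
  then show ?thesis unfolding util_def by simp
qed

lemma Qf_bound:
  assumes finE: "finite E" and pE: "\<And>j. j \<in> {1..N} \<Longrightarrow> set (P j) \<subseteq> E"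
  shows "\<bar>Qf N P R \<Lambda> i w \<tau>\<bar> \<le> real (\<Sum>j=1..N. length (P j)) * (\<Sum>e'\<in>E. \<Sum>j=1..N. \<bar>R j e'\<bar>) + (\<Sum>j=1..N. \<bar>\<Lambda> j (w j)\<bar>)"
proof -
  let ?B = "(\<Sum>e'\<in>E. \<Sum>j=1..N. \<bar>R j e'\<bar>)"
  have B0: "?B \<ge> 0" by (auto intro!: sum_nonneg)
  have fO: "finite (Soth N P i w \<tau>)" unfolding Soth_def by simp
  have cO: "card (Soth N P i w \<tau>) \<le> (\<Sum>j=1..N. length (P j))"
  proof -
    have "card (Soth N P i w \<tau>) \<le> (\<Sum>j\<in>{1..N}-{i}. card (segs P w \<tau> j))"
      unfolding Soth_def by (rule card_UN_le) simp
    also have "\<dots> \<le> (\<Sum>j\<in>{1..N}-{i}. length (P j))" by (intro sum_mono card_segs)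
    also have "\<dots> \<le> (\<Sum>j=1..N. length (P j))" by (intro sum_mono2) auto
    finally show ?thesis .
  qed
  have "\<bar>(\<Sum>r\<in>Soth N P i w \<tau>. rcum R (cnto N P i w \<tau> r) (fst r))\<bar> \<le> real (card (Soth N P i w \<tau>)) * ?B"
  proof (rule sum_abs_bound[OF fO])
    fix r assume r: "r \<in> Soth N P i w \<tau>"
    then obtain j where j0: "j \<in> {1..N}-{i}" and rj: "r \<in> segs P w \<tau> j"
      unfolding Soth_def by blast
    then have j: "j \<in> {1..N}" by blast
    obtain k where k: "k < length (P j)" and rr: "fst r = P j ! k"
      using rj unfolding segs_def by auto
    have c2: "fst r \<in> E" using pE[OF j] k rr nth_mem by (metis subsetD)
    have c1: "cnto N P i w \<tau> r \<le> N"
    proof -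
      have "{j\<in>{1..N}-{i}. r \<in> segs P w \<tau> j} \<subseteq> {1..N}" by auto
      then have "cnto N P i w \<tau> r \<le> card {1..N}" unfolding cnto_def by (intro card_mono) auto
      then show ?thesis by simp
    qed
    show "\<bar>rcum R (cnto N P i w \<tau> r) (fst r)\<bar> \<le> ?B" by (rule rcum_bound[OF finE c2 c1])
  qed
  also have "\<dots> \<le> real (\<Sum>j=1..N. length (P j)) * ?B"
    by (rule mult_right_mono[OF _ B0]) (simp only: of_nat_le_iff cO)
  finally have 1: "\<bar>(\<Sum>r\<in>Soth N P i w \<tau>. rcum R (cnto N P i w \<tau> r) (fst r))\<bar> \<le> real (\<Sum>j=1..N. length (P j)) * ?B" .
  have "\<bar>(\<Sum>j\<in>{1..N}-{i}. \<Lambda> j (w j))\<bar> \<le> (\<Sum>j\<in>{1..N}-{i}. \<bar>\<Lambda> j (w j)\<bar>)" by (rule sum_abs)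
  also have "\<dots> \<le> (\<Sum>j=1..N. \<bar>\<Lambda> j (w j)\<bar>)" by (intro sum_mono2) auto
  finally have 2: "\<bar>(\<Sum>j\<in>{1..N}-{i}. \<Lambda> j (w j))\<bar> \<le> (\<Sum>j=1..N. \<bar>\<Lambda> j (w j)\<bar>)" .
  show ?thesis unfolding Qf_def using 1 2 by linarith
qed

lemma integrable_util:
  assumes finE: "finite E" and pE: "\<And>j. j \<in> {1..N} \<Longrightarrow> set (P j) \<subseteq> E" and i: "i \<in> {1..N}"
  shows "integrable (measure_pmf p) (\<lambda>\<tau>. util N P R \<Lambda> i w \<tau>)"
proof (rule measure_pmf.integrable_const_bound[where B="real (length (P i)) * (\<Sum>e'\<in>E. \<Sum>j=1..N. \<bar>R j e'\<bar>) + \<bar>\<Lambda> i (w i)\<bar>"])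
  show "AE x in measure_pmf p. norm (util N P R \<Lambda> i w x) \<le> real (length (P i)) * (\<Sum>e'\<in>E. \<Sum>j=1..N. \<bar>R j e'\<bar>) + \<bar>\<Lambda> i (w i)\<bar>"
    by (rule AE_I2) (simp only: real_norm_def, rule util_bound[where N=N and P=P, OF finE pE i])
qed simp

lemma integrable_Qf:
  assumes finE: "finite E" and pE: "\<And>j. j \<in> {1..N} \<Longrightarrow> set (P j) \<subseteq> E"
  shows "integrable (measure_pmf p) (\<lambda>\<tau>. Qf N P R \<Lambda> i w \<tau>)"
proof (rule measure_pmf.integrable_const_bound[where B="real (\<Sum>j=1..N. length (P j)) * (\<Sum>e'\<in>E. \<Sum>j=1..N. \<bar>R j e'\<bar>) + (\<Sum>j=1..N. \<bar>\<Lambda> j (w j)\<bar>)"])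
  show "AE x in measure_pmf p. norm (Qf N P R \<Lambda> i w x) \<le> real (\<Sum>j=1..N. length (P j)) * (\<Sum>e'\<in>E. \<Sum>j=1..N. \<bar>R j e'\<bar>) + (\<Sum>j=1..N. \<bar>\<Lambda> j (w j)\<bar>)"
    by (rule AE_I2) (simp only: real_norm_def, rule Qf_bound[where N=N and P=P, OF finE pE])
qed simp

lemma exp_pot_decomp:
  assumes finE: "finite E" and pE: "\<And>j. j \<in> {1..N} \<Longrightarrow> set (P j) \<subseteq> E"
    and i: "i \<in> {1..N}" and d: "distinct (P i)"
  shows "exp_pot p E N P R \<Lambda> w = measure_pmf.expectation p (\<lambda>\<tau>. Qf N P R \<Lambda> i w \<tau>) + exp_util p N P R \<Lambda> i w"
proof -
  have "exp_pot p E N P R \<Lambda> w = measure_pmf.expectation p (\<lambda>\<tau>. Qf N P R \<Lambda> i w \<tau> + util N P R \<Lambda> i w \<tau>)"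
    unfolding exp_pot_def by (rule arg_cong[where f="measure_pmf.expectation p"], rule ext, rule pot_decomp[where N=N and P=P, OF finE pE i d])
  also have "\<dots> = measure_pmf.expectation p (\<lambda>\<tau>. Qf N P R \<Lambda> i w \<tau>) + exp_util p N P R \<Lambda> i w"
    unfolding exp_util_def
    by (rule Bochner_Integration.integral_add[OF integrable_Qf[where N=N and P=P, OF finE pE] integrable_util[where N=N and P=P, OF finE pE i]])
  finally show ?thesis .
qed


theorem theorem2:
  fixes E :: "('v \<times> 'v) set"
    and N :: nat
    and P :: "nat \<Rightarrow> ('v \<times> 'v) list"
    and W :: "nat \<Rightarrow> nat list set"
    and R :: "nat \<Rightarrow> ('v \<times> 'v) \<Rightarrow> real"
    and \<Lambda> :: "nat \<Rightarrow> nat list \<Rightarrow> real"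
    and p :: "'v realization pmf"
  assumes finE: "finite E"
    and paths_in_E: "\<And>i. i \<in> {1..N} \<Longrightarrow> set (P i) \<subseteq> E"
    and paths_connected: "\<And>i k. i \<in> {1..N} \<Longrightarrow> Suc k < length (P i) \<Longrightarrow> snd (P i ! k) = fst (P i ! Suc k)"
    and paths_simple: "\<And>i. i \<in> {1..N} \<Longrightarrow> distinct (P i)"
    and finW: "\<And>i. i \<in> {1..N} \<Longrightarrow> finite (W i)"
    and neW: "\<And>i. i \<in> {1..N} \<Longrightarrow> W i \<noteq> {}"
    and lenW: "\<And>i wv. i \<in> {1..N} \<Longrightarrow> wv \<in> W i \<Longrightarrow> length wv = length (P i)"
  shows "exact_potential {1..N} W (exp_util p N P R \<Lambda>) (exp_pot p E N P R \<Lambda>)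
         \<and> (\<exists>w. pure_nash {1..N} W (exp_util p N P R \<Lambda>) w)"
proof -
  let ?u = "exp_util p N P R \<Lambda>"
  let ?\<Phi> = "exp_pot p E N P R \<Lambda>"
  have EP: "exact_potential {1..N} W ?u ?\<Phi>"
    unfolding exact_potential_def
  proof (intro ballI allI impI)
    fix i w a b assume i: "i \<in> {1..N}" and "profile {1..N} W w" and "a \<in> W i" and "b \<in> W i"
    have d: "distinct (P i)" by (rule paths_simple[OF i])
    have da: "?\<Phi> (w(i:=a)) = measure_pmf.expectation p (\<lambda>\<tau>. Qf N P R \<Lambda> i (w(i:=a)) \<tau>) + ?u i (w(i:=a))"
      by (rule exp_pot_decomp[where N=N and P=P, OF finE paths_in_E i d])
    have db: "?\<Phi> (w(i:=b)) = measure_pmf.expectation p (\<lambda>\<tau>. Qf N P R \<Lambda> i (w(i:=b)) \<tau>) + ?u i (w(i:=b))"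
      by (rule exp_pot_decomp[where N=N and P=P, OF finE paths_in_E i d])
    have "(\<lambda>\<tau>. Qf N P R \<Lambda> i (w(i:=a)) \<tau>) = (\<lambda>\<tau>. Qf N P R \<Lambda> i (w(i:=b)) \<tau>)"
      by (simp only: Qf_upd)
    then show "?\<Phi> (w(i:=a)) - ?\<Phi> (w(i:=b)) = ?u i (w(i:=a)) - ?u i (w(i:=b))"
      using da db by simp
  qed
  define S where "S = Pi\<^sub>E {1..N} W"
  have finS: "finite S" unfolding S_def using finW by (intro finite_PiE) auto
  have neS: "S \<noteq> {}" unfolding S_def using neW by (simp add: PiE_eq_empty_iff)
  define m where "m = Max (?\<Phi> ` S)"
  have "m \<in> ?\<Phi> ` S" unfolding m_def using finS neS by (intro Max_in) auto
  then obtain w where wS: "w \<in> S" and wm: "?\<Phi> w = m" by auto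
  have maxw: "?\<Phi> w' \<le> ?\<Phi> w" if "w' \<in> S" for w'
    unfolding wm m_def using finS that by (intro Max_ge) auto
  have prof: "profile {1..N} W w" using wS unfolding S_def profile_def by auto
  have "pure_nash {1..N} W ?u w"
    unfolding pure_nash_def
  proof (intro conjI prof ballI)
    fix i a assume i: "i \<in> {1..N}" and a: "a \<in> W i"
    have wi: "w i \<in> W i" using prof i unfolding profile_def by auto
    have "w(i:=a) \<in> S" using wS i a unfolding S_def by (auto simp: PiE_iff extensional_def)
    then have le: "?\<Phi> (w(i:=a)) \<le> ?\<Phi> w" by (rule maxw)
    have "?\<Phi> (w(i:=a)) - ?\<Phi> (w(i:=w i)) = ?u i (w(i:=a)) - ?u i (w(i:=w i))"
      using EP i prof a wi unfolding exact_potential_def by blast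
    then show "?u i (w(i:=a)) \<le> ?u i w" using le by simp
  qed
  then show ?thesis using EP by blast
qed

end
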